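(* If $D\subseteq\mathcal M^d$ is an nc-domain, then its envelope $D^\sim$ is an nc-domain.
   Context: $\mathcal M^d=\bigcup_n\mathcal M_n^d$. An nc-set is a subset of $\mathcal M^d$ closed under direct sums and unitary conjugation; an nc-domain is an nc-set $D$ with $D\cap\mathcal M_n^d$ open in $\mathcal M_n^d$ for each $n$. A set $B$ is invariant if $S^{-1}(B\cap\mathcal M_n^d)S\subseteq B$ for all $n$ and invertible $S\in\mathcal M_n$. The envelope $D^\sim$ is the smallest invariant nc-set containing $D$. *)

theory Defs
  imports "Jordan_Normal_Form.Schur_Decomposition"
begin

definition lvl :: "nat \<Rightarrow> nat \<Rightarrow> complex mat list set" where
  "lvl d n = {X. length X = d \<and> (\<forall>A\<in>set X. A \<in> carrier_mat n n)}"

definition Md :: "nat \<Rightarrow> complex mat list set" where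
  "Md d = (\<Union>n\<in>{1..}. lvl d n)"

definition dsum :: "complex mat list \<Rightarrow> complex mat list \<Rightarrow> complex mat list" where
  "dsum X Y = map2 (\<lambda>A B. four_block_mat A (0\<^sub>m (dim_row A) (dim_col B)) (0\<^sub>m (dim_row B) (dim_col A)) B) X Y"

definition unitary :: "nat \<Rightarrow> complex mat \<Rightarrow> bool" where
  "unitary n U \<longleftrightarrow> U \<in> carrier_mat n n \<and> U * mat_adjoint U = 1\<^sub>m n \<and> mat_adjoint U * U = 1\<^sub>m n"

definition conj_tuple :: "complex mat \<Rightarrow> complex mat \<Rightarrow> complex mat list \<Rightarrow> complex mat list" where
  "conj_tuple T S X = map (\<lambda>A. T * A * S) X"

definition nc_set :: "nat \<Rightarrow> complex mat list set \<Rightarrow> bool" where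
  "nc_set d D \<longleftrightarrow> D \<subseteq> Md d
     \<and> (\<forall>X\<in>D. \<forall>Y\<in>D. dsum X Y \<in> D)
     \<and> (\<forall>n U X. unitary n U \<and> X \<in> D \<inter> lvl d n \<longrightarrow> conj_tuple (mat_adjoint U) U X \<in> D)"

text \<open>Openness in M_n^d, identified with C^(d n^2) (entrywise metric).\<close>
definition open_lvl :: "nat \<Rightarrow> nat \<Rightarrow> complex mat list set \<Rightarrow> bool" where
  "open_lvl d n U \<longleftrightarrow> U \<subseteq> lvl d n \<and>
     (\<forall>X\<in>U. \<exists>e>0. \<forall>Y\<in>lvl d n.
        (\<forall>k<d. \<forall>i<n. \<forall>j<n. cmod ((X!k) $$ (i,j) - (Y!k) $$ (i,j)) < e) \<longrightarrow> Y \<in> U)"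

definition nc_domain :: "nat \<Rightarrow> complex mat list set \<Rightarrow> bool" where
  "nc_domain d D \<longleftrightarrow> nc_set d D \<and> (\<forall>n\<ge>1. open_lvl d n (D \<inter> lvl d n))"

definition invariant :: "nat \<Rightarrow> complex mat list set \<Rightarrow> bool" where
  "invariant d B \<longleftrightarrow> (\<forall>n S T X. S \<in> carrier_mat n n \<and> T \<in> carrier_mat n n \<and>
      S * T = 1\<^sub>m n \<and> T * S = 1\<^sub>m n \<and> X \<in> B \<inter> lvl d n \<longrightarrow> conj_tuple T S X \<in> B)"

definition envelope :: "nat \<Rightarrow> complex mat list set \<Rightarrow> complex mat list set" where
  "envelope d D = \<Inter>{B. nc_set d B \<and> invariant d B \<and> D \<subseteq> B}"

end

theory Submission
  imports Defs
begin

definition bd :: "nat \<Rightarrow> nat \<Rightarrow> complex mat \<Rightarrow> complex mat \<Rightarrow> complex mat" where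
  "bd n m P Q = four_block_mat P (0\<^sub>m n m) (0\<^sub>m m n) Q"

lemma bd_mult:
  assumes "P \<in> carrier_mat n n" "R \<in> carrier_mat n n" "Q \<in> carrier_mat m m" "S \<in> carrier_mat m m"
  shows "bd n m P Q * bd n m R S = bd n m (P*R) (Q*S)"
proof -
  have "bd n m P Q * bd n m R S = four_block_mat (P * R + 0\<^sub>m n m * 0\<^sub>m m n) (P * 0\<^sub>m n m + 0\<^sub>m n m * S)
    (0\<^sub>m m n * R + Q * 0\<^sub>m m n) (0\<^sub>m m n * 0\<^sub>m n m + Q * S)"
    unfolding bd_def by (rule mult_four_block_mat, use assms in auto)
  also have "\<dots> = bd n m (P*R) (Q*S)" unfolding bd_def using assms by simp
  finally show ?thesis .
qed

lemma bd_carrier: "P \<in> carrier_mat n n \<Longrightarrow> Q \<in> carrier_mat m m \<Longrightarrow> bd n m P Q \<in> carrier_mat (n+m) (n+m)"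
  unfolding bd_def by auto

lemma bd_one: "bd n m (1\<^sub>m n) (1\<^sub>m m) = 1\<^sub>m (n+m)"
  unfolding bd_def by simp

lemma lvl_conj: "X \<in> lvl d n \<Longrightarrow> T \<in> carrier_mat n n \<Longrightarrow> S \<in> carrier_mat n n \<Longrightarrow>
  conj_tuple T S X \<in> lvl d n"
  unfolding lvl_def conj_tuple_def by auto

lemma lvl_unique: "0 < d \<Longrightarrow> X \<in> lvl d n \<Longrightarrow> X \<in> lvl d m \<Longrightarrow> n = m"
proof -
  assume a: "0 < d" "X \<in> lvl d n" "X \<in> lvl d m"
  then have "X ! 0 \<in> set X" unfolding lvl_def by auto
  with a have "X!0 \<in> carrier_mat n n" "X!0 \<in> carrier_mat m m" unfolding lvl_def by auto
  then show ?thesis by auto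
qed

lemma lvl0: "X \<in> lvl 0 n \<Longrightarrow> X = []"
  unfolding lvl_def by auto

lemma conj_conj:
  assumes "X \<in> lvl d n" "T \<in> carrier_mat n n" "S \<in> carrier_mat n n"
    "T' \<in> carrier_mat n n" "S' \<in> carrier_mat n n"
  shows "conj_tuple T' S' (conj_tuple T S X) = conj_tuple (T'*T) (S*S') X"
  unfolding conj_tuple_def map_map
proof (rule map_cong[OF refl])
  fix A assume "A \<in> set X"
  then have A: "A \<in> carrier_mat n n" using assms(1) unfolding lvl_def by auto
  show "((\<lambda>A. T' * A * S') \<circ> (\<lambda>A. T * A * S)) A = T' * T * A * (S * S')"
    using A assms by (simp add: assoc_mult_mat[of _ n n _ n _ n])
qed

lemma conj_id:
  assumes "X \<in> lvl d n"
  shows "conj_tuple (1\<^sub>m n) (1\<^sub>m n) X = X"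
proof -
  have "conj_tuple (1\<^sub>m n) (1\<^sub>m n) X = map id X" unfolding conj_tuple_def
    by (rule map_cong[OF refl], use assms in \<open>auto simp: lvl_def\<close>)
  then show ?thesis by simp
qed

lemma dsum_lvl:
  assumes "X \<in> lvl d n" "Y \<in> lvl d m"
  shows "dsum X Y \<in> lvl d (n+m)"
proof -
  have "length X = d" "length Y = d" using assms unfolding lvl_def by auto
  moreover have "\<forall>A\<in>set (dsum X Y). A \<in> carrier_mat (n+m) (n+m)"
  proof
    fix A assume "A \<in> set (dsum X Y)"
    then obtain i where i: "i < length X" "i < length Y"
      "A = four_block_mat (X!i) (0\<^sub>m (dim_row (X!i)) (dim_col (Y!i))) (0\<^sub>m (dim_row (Y!i)) (dim_col (X!i))) (Y!i)"
      unfolding dsum_def by (auto simp: set_zip)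
    then have "X!i \<in> carrier_mat n n" "Y!i \<in> carrier_mat m m" using assms unfolding lvl_def by auto
    then show "A \<in> carrier_mat (n+m) (n+m)" using i by auto
  qed
  ultimately show ?thesis unfolding lvl_def dsum_def by auto
qed

lemma dsum_conj:
  assumes "X \<in> lvl d n" "Y \<in> lvl d m"
    "T1 \<in> carrier_mat n n" "S1 \<in> carrier_mat n n" "T2 \<in> carrier_mat m m" "S2 \<in> carrier_mat m m"
  shows "dsum (conj_tuple T1 S1 X) (conj_tuple T2 S2 Y) = conj_tuple (bd n m T1 T2) (bd n m S1 S2) (dsum X Y)"
proof (rule nth_equalityI)
  show "length (dsum (conj_tuple T1 S1 X) (conj_tuple T2 S2 Y)) = length (conj_tuple (bd n m T1 T2) (bd n m S1 S2) (dsum X Y))"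
    by (simp add: dsum_def conj_tuple_def)
  fix i assume i: "i < length (dsum (conj_tuple T1 S1 X) (conj_tuple T2 S2 Y))"
  then have il: "i < length X" "i < length Y" by (auto simp: dsum_def conj_tuple_def)
  have A: "X ! i \<in> carrier_mat n n" using assms(1) il unfolding lvl_def by auto
  have B: "Y ! i \<in> carrier_mat m m" using assms(2) il unfolding lvl_def by auto
  have "dsum (conj_tuple T1 S1 X) (conj_tuple T2 S2 Y) ! i = bd n m (T1 * X!i * S1) (T2 * Y!i * S2)"
    using il A B assms unfolding dsum_def conj_tuple_def bd_def by simp
  also have "\<dots> = bd n m T1 T2 * bd n m (X!i) (Y!i) * bd n m S1 S2"
    using A B assms by (simp add: bd_mult)
  also have "\<dots> = conj_tuple (bd n m T1 T2) (bd n m S1 S2) (dsum X Y) ! i"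
    using il A B unfolding dsum_def conj_tuple_def bd_def by simp
  finally show "dsum (conj_tuple T1 S1 X) (conj_tuple T2 S2 Y) ! i = conj_tuple (bd n m T1 T2) (bd n m S1 S2) (dsum X Y) ! i" .
qed

lemma inv_comp:
  fixes S T S' T' :: "complex mat"
  assumes "S \<in> carrier_mat n n" "T \<in> carrier_mat n n" "S' \<in> carrier_mat n n" "T' \<in> carrier_mat n n"
    "S * T = 1\<^sub>m n" "S' * T' = 1\<^sub>m n"
  shows "(S * S') * (T' * T) = 1\<^sub>m n"
proof -
  have "(S * S') * (T' * T) = S * (S' * (T' * T))"
    using assms by (intro assoc_mult_mat) auto
  also have "S' * (T' * T) = (S' * T') * T"
    using assms by (intro assoc_mult_mat[symmetric]) auto
  finally show ?thesis using assms by (simp add: left_mult_one_mat[OF assms(2)])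
qed

definition env_set :: "nat \<Rightarrow> complex mat list set \<Rightarrow> complex mat list set" where
  "env_set d D = {conj_tuple T S X | n S T X. S \<in> carrier_mat n n \<and> T \<in> carrier_mat n n \<and>
     S * T = 1\<^sub>m n \<and> T * S = 1\<^sub>m n \<and> X \<in> D \<and> X \<in> lvl d n}"

lemma env_D: "D \<subseteq> Md d \<Longrightarrow> D \<subseteq> env_set d D"
proof
  fix X assume "D \<subseteq> Md d" "X \<in> D"
  then obtain n where n: "X \<in> lvl d n" unfolding Md_def by auto
  have "conj_tuple (1\<^sub>m n) (1\<^sub>m n) X \<in> env_set d D"
    unfolding env_set_def using n \<open>X \<in> D\<close> by (intro CollectI exI[of _ n] exI[of _ "1\<^sub>m n"] exI[of _ X]) auto
  then show "X \<in> env_set d D" using conj_id[OF n] by simp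
qed

lemma env_inv:
  assumes D: "D \<subseteq> Md d"
  assumes "S' \<in> carrier_mat k k" "T' \<in> carrier_mat k k" "S' * T' = 1\<^sub>m k" "T' * S' = 1\<^sub>m k"
    "Z \<in> env_set d D" "Z \<in> lvl d k"
  shows "conj_tuple T' S' Z \<in> env_set d D"
proof -
  obtain n S T X where Z: "S \<in> carrier_mat n n" "T \<in> carrier_mat n n" "S * T = 1\<^sub>m n" "T * S = 1\<^sub>m n"
    "X \<in> D" "X \<in> lvl d n" "Z = conj_tuple T S X"
    using assms(6) unfolding env_set_def by blast
  show ?thesis
  proof (cases "d = 0")
    case True
    then have "conj_tuple T' S' Z = []" using lvl0 assms(7) by (simp add: conj_tuple_def)
    moreover have "X = []" using lvl0 Z True by simp
    ultimately show ?thesis using env_D[OF D] Z by auto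
  next
    case False
    have "Z \<in> lvl d n" using Z lvl_conj by simp
    then have kn: "k = n" using lvl_unique False assms(7) by auto
    have "conj_tuple T' S' Z = conj_tuple (T'*T) (S*S') X"
      using conj_conj[OF Z(6) Z(2) Z(1)] Z assms kn by simp
    moreover have "(S*S') * (T'*T) = 1\<^sub>m n" using inv_comp Z assms kn by simp
    moreover have "(T'*T) * (S*S') = 1\<^sub>m n" using inv_comp[of T' n S' T S] Z assms kn by simp
    ultimately show ?thesis unfolding env_set_def using Z assms kn
      by (intro CollectI exI[of _ n] exI[of _ "S*S'"] exI[of _ "T'*T"] exI[of _ X]) auto
  qed
qed

lemma env_Md:
  assumes D: "D \<subseteq> Md d" and Z: "Z \<in> env_set d D"
  shows "Z \<in> Md d"
proof -
  obtain n S T X where Z: "S \<in> carrier_mat n n" "T \<in> carrier_mat n n"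
    "X \<in> D" "X \<in> lvl d n" "Z = conj_tuple T S X"
    using Z unfolding env_set_def by blast
  show ?thesis
  proof (cases "d = 0")
    case True
    then have "X = []" using lvl0 Z by simp
    then show ?thesis using Z D by (auto simp: conj_tuple_def)
  next
    case False
    obtain k where k: "k \<ge> 1" "X \<in> lvl d k" using Z D unfolding Md_def by auto
    then have "k = n" using lvl_unique False Z by auto
    then have "Z \<in> lvl d k" using Z lvl_conj by simp
    then show ?thesis using k unfolding Md_def by auto
  qed
qed

lemma env_dsum:
  assumes D: "nc_set d D" and Z1: "Z1 \<in> env_set d D" and Z2: "Z2 \<in> env_set d D"
  shows "dsum Z1 Z2 \<in> env_set d D"
proof -
  obtain n S1 T1 X where A: "S1 \<in> carrier_mat n n" "T1 \<in> carrier_mat n n" "S1 * T1 = 1\<^sub>m n" "T1 * S1 = 1\<^sub>m n"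
    "X \<in> D" "X \<in> lvl d n" "Z1 = conj_tuple T1 S1 X"
    using Z1 unfolding env_set_def by blast
  obtain m S2 T2 Y where B: "S2 \<in> carrier_mat m m" "T2 \<in> carrier_mat m m" "S2 * T2 = 1\<^sub>m m" "T2 * S2 = 1\<^sub>m m"
    "Y \<in> D" "Y \<in> lvl d m" "Z2 = conj_tuple T2 S2 Y"
    using Z2 unfolding env_set_def by blast
  have eq: "dsum Z1 Z2 = conj_tuple (bd n m T1 T2) (bd n m S1 S2) (dsum X Y)"
    using dsum_conj[OF A(6) B(6) A(2) A(1) B(2) B(1)] A B by simp
  have XY: "dsum X Y \<in> D" using D A B unfolding nc_set_def by auto
  have l: "dsum X Y \<in> lvl d (n+m)" using dsum_lvl A B by auto
  have i1: "bd n m S1 S2 * bd n m T1 T2 = 1\<^sub>m (n+m)" using A B by (simp add: bd_mult bd_one)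
  have i2: "bd n m T1 T2 * bd n m S1 S2 = 1\<^sub>m (n+m)" using A B by (simp add: bd_mult bd_one)
  show ?thesis unfolding eq env_set_def
    by (intro CollectI exI[of _ "n+m"] exI[of _ "bd n m S1 S2"] exI[of _ "bd n m T1 T2"] exI[of _ "dsum X Y"])
      (use i1 i2 XY l A B bd_carrier in auto)
qed

lemma env_ncset:
  assumes D: "nc_set d D"
  shows "nc_set d (env_set d D)"
proof -
  have DM: "D \<subseteq> Md d" using D unfolding nc_set_def by auto
  have "conj_tuple (mat_adjoint U) U X \<in> env_set d D"
    if "unitary n U" "X \<in> env_set d D" "X \<in> lvl d n" for n U X
  proof -
    have U: "U \<in> carrier_mat n n" "U * mat_adjoint U = 1\<^sub>m n" "mat_adjoint U * U = 1\<^sub>m n"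
      using that unfolding unitary_def by auto
    have "dim_row (mat_adjoint U) = n" using U(3) by (metis index_mult_mat(2) index_one_mat(2))
    moreover have "dim_col (mat_adjoint U) = n" using U(2) by (metis index_mult_mat(3) index_one_mat(3))
    ultimately have "mat_adjoint U \<in> carrier_mat n n" by auto
    then show ?thesis using env_inv[OF DM U(1) _ U(2) U(3) that(2,3)] by simp
  qed
  then show ?thesis unfolding nc_set_def using env_Md[OF DM] env_dsum[OF D] by blast
qed

lemma env_invariant:
  assumes D: "nc_set d D"
  shows "invariant d (env_set d D)"
  using env_inv D unfolding invariant_def nc_set_def by blast

lemma envelope_eq:
  assumes D: "nc_set d D"
  shows "envelope d D = env_set d D"
proof
  have DM: "D \<subseteq> Md d" using D unfolding nc_set_def by auto
  show "envelope d D \<subseteq> env_set d D" unfolding envelope_def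
    using env_ncset[OF D] env_invariant[OF D] env_D[OF DM] by blast
  show "env_set d D \<subseteq> envelope d D" unfolding envelope_def
  proof (rule Inter_greatest)
    fix B assume "B \<in> {B. nc_set d B \<and> invariant d B \<and> D \<subseteq> B}"
    then have B: "invariant d B" "D \<subseteq> B" by auto
    show "env_set d D \<subseteq> B"
    proof
      fix Z assume "Z \<in> env_set d D"
      then obtain n S T X where Z: "S \<in> carrier_mat n n" "T \<in> carrier_mat n n" "S * T = 1\<^sub>m n" "T * S = 1\<^sub>m n"
        "X \<in> D" "X \<in> lvl d n" "Z = conj_tuple T S X"
        unfolding env_set_def by blast
      then show "Z \<in> B" using B unfolding invariant_def by blast
    qed
  qed
qed

lemma entry3:
  fixes S Y T :: "complex mat"
  assumes "S \<in> carrier_mat n n" "Y \<in> carrier_mat n n" "T \<in> carrier_mat n n" "i < n" "j < n"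
  shows "(S*Y*T) $$ (i,j) = (\<Sum>l<n. (\<Sum>k<n. S$$(i,k) * Y$$(k,l)) * T$$(l,j))"
proof -
  have "(S*Y*T) $$ (i,j) = (\<Sum>a<n. S $$ (i, a) * (\<Sum>l<n. Y $$ (a, l) * T $$ (l, j)))"
    using assms by (simp add: scalar_prod_def atLeast0LessThan)
  also have "\<dots> = (\<Sum>a<n. \<Sum>l<n. S $$ (i, a) * Y $$ (a, l) * T $$ (l, j))"
    by (simp add: sum_distrib_left mult.assoc)
  also have "\<dots> = (\<Sum>l<n. \<Sum>a<n. S $$ (i, a) * Y $$ (a, l) * T $$ (l, j))"
    by (rule sum.swap)
  also have "\<dots> = (\<Sum>l<n. (\<Sum>k<n. S$$(i,k) * Y$$(k,l)) * T$$(l,j))"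
    by (simp add: sum_distrib_right)
  finally show ?thesis .
qed

lemma entry_bound:
  fixes S Y Z T :: "complex mat"
  assumes c: "S \<in> carrier_mat n n" "Y \<in> carrier_mat n n" "Z \<in> carrier_mat n n" "T \<in> carrier_mat n n"
    and ij: "i < n" "j < n"
    and close: "\<forall>k<n. \<forall>l<n. cmod (Y$$(k,l) - Z$$(k,l)) < \<delta>"
  shows "cmod ((S*Y*T) $$ (i,j) - (S*Z*T) $$ (i,j)) \<le>
    \<delta> * (\<Sum>i<n. \<Sum>k<n. cmod (S$$(i,k))) * (\<Sum>l<n. \<Sum>j<n. cmod (T$$(l,j)))"
proof -
  have "(S*Y*T) $$ (i,j) - (S*Z*T) $$ (i,j) = (\<Sum>l<n. (\<Sum>k<n. S$$(i,k) * (Y$$(k,l) - Z$$(k,l))) * T$$(l,j))"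
    unfolding entry3[OF c(1,2,4) ij] entry3[OF c(1,3,4) ij]
    by (simp add: sum_subtractf[symmetric] algebra_simps sum_distrib_left sum_distrib_right)
  also have "cmod \<dots> \<le> (\<Sum>l<n. cmod ((\<Sum>k<n. S$$(i,k) * (Y$$(k,l) - Z$$(k,l))) * T$$(l,j)))"
    by (rule norm_sum)
  also have "\<dots> \<le> (\<Sum>l<n. (\<Sum>k<n. cmod (S$$(i,k)) * \<delta>) * cmod (T$$(l,j)))"
  proof (rule sum_mono)
    fix l assume l: "l \<in> {..<n}"
    have "cmod (\<Sum>k<n. S$$(i,k) * (Y$$(k,l) - Z$$(k,l))) \<le> (\<Sum>k<n. cmod (S$$(i,k) * (Y$$(k,l) - Z$$(k,l))))"
      by (rule norm_sum)
    also have "\<dots> \<le> (\<Sum>k<n. cmod (S$$(i,k)) * \<delta>)"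
    proof (rule sum_mono)
      fix k assume "k \<in> {..<n}"
      then have "cmod (Y$$(k,l) - Z$$(k,l)) \<le> \<delta>" using close l by (meson lessThan_iff less_imp_le)
      then show "cmod (S$$(i,k) * (Y$$(k,l) - Z$$(k,l))) \<le> cmod (S$$(i,k)) * \<delta>"
        by (simp add: norm_mult mult_left_mono)
    qed
    finally show "cmod ((\<Sum>k<n. S$$(i,k) * (Y$$(k,l) - Z$$(k,l))) * T$$(l,j)) \<le> (\<Sum>k<n. cmod (S$$(i,k)) * \<delta>) * cmod (T$$(l,j))"
      by (simp add: norm_mult mult_right_mono)
  qed
  also have "\<dots> = \<delta> * (\<Sum>k<n. cmod (S$$(i,k))) * (\<Sum>l<n. cmod (T$$(l,j)))"
    by (simp add: sum_distrib_left sum_distrib_right algebra_simps) (rule sum.swap)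
  also have "\<dots> \<le> \<delta> * (\<Sum>i<n. \<Sum>k<n. cmod (S$$(i,k))) * (\<Sum>l<n. \<Sum>j<n. cmod (T$$(l,j)))"
  proof -
    have d0: "\<delta> \<ge> 0"
    proof -
      have "cmod (Y$$(i,i) - Z$$(i,i)) < \<delta>" using close ij by auto
      then show ?thesis by (meson norm_ge_zero order.trans less_imp_le)
    qed
    have a: "(\<Sum>k<n. cmod (S$$(i,k))) \<le> (\<Sum>i<n. \<Sum>k<n. cmod (S$$(i,k)))"
      using ij by (intro member_le_sum[where f = "\<lambda>i. \<Sum>k<n. cmod (S$$(i,k))"]) (auto intro: sum_nonneg)
    have b: "(\<Sum>l<n. cmod (T$$(l,j))) \<le> (\<Sum>l<n. \<Sum>j<n. cmod (T$$(l,j)))"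
      using ij by (intro sum_mono member_le_sum[where f = "\<lambda>j. cmod (T$$(_,j))"]) auto
    have "0 \<le> \<delta> * (\<Sum>i<n. \<Sum>k<n. cmod (S$$(i,k)))" using d0 by (simp add: sum_nonneg)
    then show ?thesis using a b d0 by (intro mult_mono mult_left_mono) (auto intro: sum_nonneg)
  qed
  finally show ?thesis .
qed

lemma env_open:
  assumes D: "nc_domain d D" and n1: "n \<ge> 1"
  shows "open_lvl d n (env_set d D \<inter> lvl d n)"
  unfolding open_lvl_def
proof (intro conjI ballI)
  show "env_set d D \<inter> lvl d n \<subseteq> lvl d n" by auto
  have DM: "D \<subseteq> Md d" using D unfolding nc_domain_def nc_set_def by auto
  fix Z assume Zin: "Z \<in> env_set d D \<inter> lvl d n"
  obtain k S T X where Z: "S \<in> carrier_mat k k" "T \<in> carrier_mat k k" "S * T = 1\<^sub>m k" "T * S = 1\<^sub>m k"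
    "X \<in> D" "X \<in> lvl d k" "Z = conj_tuple T S X"
    using Zin unfolding env_set_def by blast
  show "\<exists>e>0. \<forall>Y\<in>lvl d n. (\<forall>k<d. \<forall>i<n. \<forall>j<n. cmod ((Z!k) $$ (i,j) - (Y!k) $$ (i,j)) < e) \<longrightarrow>
          Y \<in> env_set d D \<inter> lvl d n"
  proof (cases "d = 0")
    case True
    have "Y \<in> env_set d D \<inter> lvl d n" if "Y \<in> lvl d n" for Y
      using that Zin True lvl0[of Z n] lvl0[of Y n] by auto
    then show ?thesis by (intro exI[of _ 1]) auto
  next
    case False
    have "Z \<in> lvl d k" using Z lvl_conj by simp
    then have kn: "k = n" using lvl_unique False Zin by auto
    have XZ: "X = conj_tuple S T Z"
      using conj_conj[OF Z(6) Z(2) Z(1), of S T] Z conj_id[OF Z(6)] by simp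
    obtain e where e: "e > 0" and eD: "\<forall>Y\<in>lvl d n. (\<forall>k<d. \<forall>i<n. \<forall>j<n. cmod ((X!k) $$ (i,j) - (Y!k) $$ (i,j)) < e) \<longrightarrow>
          Y \<in> D \<inter> lvl d n"
      using D n1 Z kn unfolding nc_domain_def open_lvl_def by blast
    define a where "a = (\<Sum>i<n. \<Sum>k<n. cmod (S$$(i,k)))"
    define b where "b = (\<Sum>l<n. \<Sum>j<n. cmod (T$$(l,j)))"
    have ab: "a * b \<ge> 0" unfolding a_def b_def by (simp add: sum_nonneg)
    define \<delta> where "\<delta> = e / (a * b + 1)"
    have dpos: "\<delta> > 0" unfolding \<delta>_def using e ab by simp
    have dab: "\<delta> * a * b < e"
    proof -
      have "\<delta> * a * b = e * (a * b) / (a * b + 1)" unfolding \<delta>_def by simp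
      also have "\<dots> < e" using e ab by (simp add: divide_less_eq)
      finally show ?thesis .
    qed
    show ?thesis
    proof (intro exI[of _ \<delta>] conjI dpos ballI impI)
      fix Y assume Y: "Y \<in> lvl d n" and cl: "\<forall>k<d. \<forall>i<n. \<forall>j<n. cmod ((Z!k) $$ (i,j) - (Y!k) $$ (i,j)) < \<delta>"
      define W where "W = conj_tuple S T Y"
      have Wl: "W \<in> lvl d n" unfolding W_def using lvl_conj Y Z kn by simp
      have "\<forall>q<d. \<forall>i<n. \<forall>j<n. cmod ((X!q) $$ (i,j) - (W!q) $$ (i,j)) < e"
      proof (intro allI impI)
        fix q i j assume q: "q < d" and ij: "i < n" "j < n"
        have lens: "length Z = d" "length Y = d" using Zin Y unfolding lvl_def by auto
        have Zq: "Z!q \<in> carrier_mat n n" using Zin q lens unfolding lvl_def by auto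
        have Yq: "Y!q \<in> carrier_mat n n" using Y q lens unfolding lvl_def by auto
        have "X!q = S * Z!q * T" using XZ q lens by (simp add: conj_tuple_def)
        moreover have "W!q = S * Y!q * T" using q lens by (simp add: conj_tuple_def W_def)
        moreover have "cmod ((S * Z!q * T) $$ (i,j) - (S * Y!q * T) $$ (i,j)) \<le> \<delta> * a * b"
          unfolding a_def b_def
          by (rule entry_bound[OF _ Zq Yq _ ij]) (use Z kn cl q in auto)
        ultimately show "cmod ((X!q) $$ (i,j) - (W!q) $$ (i,j)) < e" using dab by simp
      qed
      then have WD: "W \<in> D" using eD Wl by blast
      have "Y = conj_tuple T S W"
        unfolding W_def using conj_conj[OF Y, of S T T S] Z kn conj_id[OF Y] by simp
      then have "Y \<in> env_set d D" unfolding env_set_def using WD Wl Z kn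
        by (intro CollectI exI[of _ n] exI[of _ S] exI[of _ T] exI[of _ W]) auto
      then show "Y \<in> env_set d D \<inter> lvl d n" using Y by auto
    qed
  qed
qed

theorem proposition3p6:
  fixes d :: nat and D :: "complex mat list set"
  assumes "nc_domain d D"
  shows "nc_domain d (envelope d D)"
proof -
  have D: "nc_set d D" using assms unfolding nc_domain_def by auto
  show ?thesis unfolding envelope_eq[OF D] nc_domain_def
    using env_ncset[OF D] env_open[OF assms] by auto
qed

end
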